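(* Assume: (A1) $f(x,y)$ and each component of $g(x,y)$ are convex in $y$ for each fixed $x$, and $f,g$ are twice continuously differentiable; (A2) $Y\subseteq\mathbb{R}^m$ is a compact convex set with $\{y:\exists x\in X \text{ such that } g(x,y)\le 0\}\subseteq\mathrm{int}(Y)$; (R1) for each $x\in X$ there exists $y$ with $g(x,y)<0$. Let $\epsilon\ge0$. A point $(\overline{x},\overline{y})$ is a (global) minimizer of $\mathsf{BLP}(\epsilon)$ if and only if for some $\lambda\ge0$ the point $(\overline{x},\overline{y},\lambda)$ is feasible for and a (global) minimizer of $\mathsf{DBP}(\epsilon,0)$.
   Context: Let $F:\mathbb{R}^n\times\mathbb{R}^m\to\mathbb{R}$, $f:\mathbb{R}^n\times\mathbb{R}^m\to\mathbb{R}$, $g:\mathbb{R}^n\times\mathbb{R}^m\to\mathbb{R}^p$, $G:\mathbb{R}^n\to\mathbb{R}^q$; vector inequalities componentwise; $X=\{x:G(x)\le0\}$. $\mathsf{BLP}(\epsilon)$ is: minimize $F(x,y)$ over $(x,y)$ subject to $G(x)\le0$, $f(x,y)\le\min_{y'}\{f(x,y'):g(x,y')\le0\}+\epsilon$ and $g(x,y)\le\epsilon$. For $\mu\ge0$, $h_\mu(\lambda,x)=\min_y\{\mu\|y\|^2+f(x,y)+\lambda^{\mathsf T}g(x,y):y\in Y\}$ with $Y$ from (A2); $\mathcal{C}(\epsilon,\mu)=\{(x,y,\lambda): G(x)\le0,\ g(x,y)\le\epsilon,\ \lambda\ge0,\ f(x,y)-h_\mu(\lambda,x)\le\epsilon\}$;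 and $\mathsf{DBP}(\epsilon,\mu)$ is: minimize $F(x,y)$ over $(x,y,\lambda)\in\mathcal{C}(\epsilon,\mu)$. *)

theory Defs
  imports "HOL-Analysis.Analysis"
begin

definition C2 :: "('a::euclidean_space \<Rightarrow> real) \<Rightarrow> bool" where
  "C2 h \<longleftrightarrow> (\<exists>(DF :: 'a \<Rightarrow> ('a \<Rightarrow>\<^sub>L real)) (D2F :: 'a \<Rightarrow> ('a \<Rightarrow>\<^sub>L ('a \<Rightarrow>\<^sub>L real))).
      (\<forall>z. (h has_derivative blinfun_apply (DF z)) (at z)) \<and>
      (\<forall>z. (DF has_derivative blinfun_apply (D2F z)) (at z)) \<and>
      continuous_on UNIV D2F)"

definition Xset :: "(real^'n \<Rightarrow> real^'q) \<Rightarrow> (real^'n) set" where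
  "Xset G = {x. \<forall>j. G x $ j \<le> 0}"

definition lower_val :: "(real^'n \<Rightarrow> real^'m \<Rightarrow> real) \<Rightarrow> (real^'n \<Rightarrow> real^'m \<Rightarrow> real^'p)
    \<Rightarrow> real^'n \<Rightarrow> real" where
  "lower_val f g x = Inf {f x y' | y'. \<forall>i. g x y' $ i \<le> 0}"

definition BLP_feasible ::
  "(real^'n \<Rightarrow> real^'m \<Rightarrow> real) \<Rightarrow> (real^'n \<Rightarrow> real^'m \<Rightarrow> real^'p) \<Rightarrow> (real^'n \<Rightarrow> real^'q)
    \<Rightarrow> real \<Rightarrow> real^'n \<Rightarrow> real^'m \<Rightarrow> bool" where
  "BLP_feasible f g G \<epsilon> x y \<longleftrightarrow>
     (\<forall>j. G x $ j \<le> 0) \<and> f x y \<le> lower_val f g x + \<epsilon> \<and> (\<forall>i. g x y $ i \<le> \<epsilon>)"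

definition BLP_minimizer ::
  "(real^'n \<Rightarrow> real^'m \<Rightarrow> real) \<Rightarrow> (real^'n \<Rightarrow> real^'m \<Rightarrow> real) \<Rightarrow> (real^'n \<Rightarrow> real^'m \<Rightarrow> real^'p)
    \<Rightarrow> (real^'n \<Rightarrow> real^'q) \<Rightarrow> real \<Rightarrow> real^'n \<Rightarrow> real^'m \<Rightarrow> bool" where
  "BLP_minimizer F f g G \<epsilon> x y \<longleftrightarrow>
     BLP_feasible f g G \<epsilon> x y \<and>
     (\<forall>x' y'. BLP_feasible f g G \<epsilon> x' y' \<longrightarrow> F x y \<le> F x' y')"

definition h_mu :: "(real^'n \<Rightarrow> real^'m \<Rightarrow> real) \<Rightarrow> (real^'n \<Rightarrow> real^'m \<Rightarrow> real^'p) \<Rightarrow> (real^'m) set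
    \<Rightarrow> real \<Rightarrow> real^'p \<Rightarrow> real^'n \<Rightarrow> real" where
  "h_mu f g Y \<mu> lam x = Inf ((\<lambda>y. \<mu> * (norm y)\<^sup>2 + f x y + lam \<bullet> g x y) ` Y)"

definition DBP_feasible ::
  "(real^'n \<Rightarrow> real^'m \<Rightarrow> real) \<Rightarrow> (real^'n \<Rightarrow> real^'m \<Rightarrow> real^'p) \<Rightarrow> (real^'n \<Rightarrow> real^'q) \<Rightarrow> (real^'m) set
    \<Rightarrow> real \<Rightarrow> real \<Rightarrow> real^'n \<Rightarrow> real^'m \<Rightarrow> real^'p \<Rightarrow> bool" where
  "DBP_feasible f g G Y \<epsilon> \<mu> x y lam \<longleftrightarrow>
     (\<forall>j. G x $ j \<le> 0) \<and> (\<forall>i. g x y $ i \<le> \<epsilon>) \<and> (\<forall>i. lam $ i \<ge> 0) \<and>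
     f x y - h_mu f g Y \<mu> lam x \<le> \<epsilon>"

definition DBP_minimizer ::
  "(real^'n \<Rightarrow> real^'m \<Rightarrow> real) \<Rightarrow> (real^'n \<Rightarrow> real^'m \<Rightarrow> real) \<Rightarrow> (real^'n \<Rightarrow> real^'m \<Rightarrow> real^'p)
    \<Rightarrow> (real^'n \<Rightarrow> real^'q) \<Rightarrow> (real^'m) set \<Rightarrow> real \<Rightarrow> real
    \<Rightarrow> real^'n \<Rightarrow> real^'m \<Rightarrow> real^'p \<Rightarrow> bool" where
  "DBP_minimizer F f g G Y \<epsilon> \<mu> x y lam \<longleftrightarrow>
     DBP_feasible f g G Y \<epsilon> \<mu> x y lam \<and>
     (\<forall>x' y' lam'. DBP_feasible f g G Y \<epsilon> \<mu> x' y' lam' \<longrightarrow> F x y \<le> F x' y')"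

end

theory Submission imports Defs begin

lemma scal1:
  fixes \<alpha> \<beta> b :: real
  assumes "\<And>s. s > 0 \<Longrightarrow> \<alpha> + s * \<beta> \<ge> b" shows "\<alpha> \<ge> b"
proof (rule ccontr)
  assume h: "\<not> \<alpha> \<ge> b"
  show False
  proof (cases "\<beta> \<le> 0")
    case True then show False using assms[of 1] h by simp
  next
    case False
    have "\<alpha> + ((b-\<alpha>)/(2*\<beta>)) * \<beta> \<ge> b" using assms[of "(b-\<alpha>)/(2*\<beta>)"] h False by simp
    moreover have "((b-\<alpha>)/(2*\<beta>)) * \<beta> = (b-\<alpha>)/2" using False by (simp add: field_simps)
    ultimately show False using h by simp
  qed
qed

lemma scal2:
  fixes \<alpha> \<beta> b :: real
  assumes "\<And>s. s \<ge> 0 \<Longrightarrow> \<alpha> + s * \<beta> \<ge> b" shows "\<beta> \<ge> 0"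
proof (rule ccontr)
  assume h: "\<not> \<beta> \<ge> 0"
  have a0: "\<alpha> \<ge> b" using assms[of 0] by simp
  define s where "s = (\<alpha> - b + 1) / (- \<beta>)"
  have "s \<ge> 0" using a0 h unfolding s_def by (intro divide_nonneg_pos) auto
  moreover have "s * \<beta> = -(\<alpha> - b + 1)" using h by (simp add: s_def field_simps)
  ultimately show False using assms[of s] by simp
qed

lemma strong_dual:
  fixes fx :: "real^'m \<Rightarrow> real" and gx :: "real^'m \<Rightarrow> real^'p" and Y :: "(real^'m) set" and v :: real
  assumes cf: "convex_on UNIV fx" and cg: "\<And>i. convex_on UNIV (\<lambda>y. gx y $ i)"
    and cY: "convex Y" and y0: "y0 \<in> Y" "\<And>i. gx y0 $ i < 0"
    and opt: "\<And>y. y \<in> Y \<Longrightarrow> (\<forall>i. gx y $ i \<le> 0) \<Longrightarrow> v \<le> fx y"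
  shows "\<exists>lam. (\<forall>i. lam $ i \<ge> 0) \<and> (\<forall>y\<in>Y. v \<le> fx y + lam \<bullet> gx y)"
proof -
  define A where "A = {z :: (real^'p) \<times> real. \<exists>y\<in>Y. (\<forall>i. gx y $ i \<le> fst z $ i) \<and> fx y \<le> snd z}"
  define B where "B = {z :: (real^'p) \<times> real. (\<forall>i. fst z $ i < 0) \<and> snd z < v}"
  have convA: "convex A"
  proof (rule convexI)
    fix z1 z2 and u w :: real
    assume z1: "z1 \<in> A" and z2: "z2 \<in> A" and u: "0 \<le> u" and w: "0 \<le> w" and uw: "u + w = 1"
    obtain y1 where y1: "y1 \<in> Y" "\<forall>i. gx y1 $ i \<le> fst z1 $ i" "fx y1 \<le> snd z1" using z1 A_def by auto
    obtain y2 where y2: "y2 \<in> Y" "\<forall>i. gx y2 $ i \<le> fst z2 $ i" "fx y2 \<le> snd z2" using z2 A_def by auto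
    define y where "y = (1 - w) *\<^sub>R y1 + w *\<^sub>R y2"
    have uu: "u = 1 - w" using uw by simp
    have w1: "w \<le> 1" using u uw by simp
    have yY: "y \<in> Y" using cY y1(1) y2(1) w w1 unfolding convex_alt y_def by blast
    have "\<forall>i. gx y $ i \<le> fst (u *\<^sub>R z1 + w *\<^sub>R z2) $ i"
    proof
      fix i
      have "gx y $ i \<le> (1 - w) * gx y1 $ i + w * gx y2 $ i"
        unfolding y_def using convex_onD[OF cg[of i], of w y1 y2] w w1 by simp
      also have "\<dots> \<le> (1 - w) * fst z1 $ i + w * fst z2 $ i"
        using y1(2) y2(2) w w1 by (intro add_mono mult_left_mono) auto
      finally show "gx y $ i \<le> fst (u *\<^sub>R z1 + w *\<^sub>R z2) $ i" by (simp add: uu)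
    qed
    moreover have "fx y \<le> snd (u *\<^sub>R z1 + w *\<^sub>R z2)"
    proof -
      have "fx y \<le> (1 - w) * fx y1 + w * fx y2"
        unfolding y_def using convex_onD[OF cf, of w y1 y2] w w1 by simp
      also have "\<dots> \<le> (1 - w) * snd z1 + w * snd z2"
        using y1(3) y2(3) w w1 by (intro add_mono mult_left_mono) auto
      finally show ?thesis by (simp add: uu)
    qed
    ultimately show "u *\<^sub>R z1 + w *\<^sub>R z2 \<in> A" using yY A_def by blast
  qed
  have cmb: "u * a + w * b < (c::real)" if "a < c" "b < c" "0 \<le> u" "0 \<le> w" "u + w = 1" for u w a b c
  proof -
    have "u * a \<le> u * c" "w * b \<le> w * c" using that by (auto intro: mult_left_mono)
    moreover have "u * a < u * c \<or> w * b < w * c" using that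
      by (cases "u > 0") (auto intro: mult_strict_left_mono)
    ultimately have "u * a + w * b < u * c + w * c" by linarith
    also have "\<dots> = c" proof -
      have "u * c + w * c = (u + w) * c" by (simp add: distrib_right)
      thus ?thesis using that(5) by simp
    qed
    finally show ?thesis .
  qed
  have convB: "convex B"
  proof (rule convexI)
    fix z1 z2 and u w :: real
    assume z1: "z1 \<in> B" and z2: "z2 \<in> B" and u: "0 \<le> u" and w: "0 \<le> w" and uw: "u + w = 1"
    have "\<forall>i. fst z1 $ i < 0" "snd z1 < v" "\<forall>i. fst z2 $ i < 0" "snd z2 < v" using z1 z2 B_def by auto
    hence "\<forall>i. u * fst z1 $ i + w * fst z2 $ i < 0" "u * snd z1 + w * snd z2 < v"
      using cmb[OF _ _ u w uw] by blast+
    thus "u *\<^sub>R z1 + w *\<^sub>R z2 \<in> B" unfolding B_def by simp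
  qed
  have Ane: "A \<noteq> {}" using y0(1) A_def by force
  have Bne: "(- 1, v - 1) \<in> B" unfolding B_def by simp
  have disj: "A \<inter> B = {}"
  proof (rule ccontr)
    assume "A \<inter> B \<noteq> {}"
    then obtain z where "z \<in> A" "z \<in> B" by blast
    then obtain y where "y \<in> Y" "\<forall>i. gx y $ i \<le> fst z $ i" "fx y \<le> snd z" "\<forall>i. fst z $ i < 0" "snd z < v"
      unfolding A_def B_def by auto
    moreover have "\<forall>i. gx y $ i \<le> 0" using calculation by (meson less_imp_le order.trans)
    ultimately show False using opt by fastforce
  qed
  obtain a b where ab: "a \<noteq> 0" "\<forall>z\<in>A. a \<bullet> z \<le> b" "\<forall>z\<in>B. a \<bullet> z \<ge> b"
    using separating_hyperplane_sets[OF convA convB Ane] Bne disj by blast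
  obtain p q where pq: "a = (p, q)" by (cases a)
  have Bmem: "(u, t) \<in> B \<Longrightarrow> p \<bullet> u + q * t \<ge> b" for u t
    using ab(3) pq by fastforce
  have dir: "a \<bullet> d \<ge> 0" if d1: "\<forall>i. fst d $ i \<le> 0" and d2: "snd d \<le> 0" for d
  proof (rule scal2[where \<alpha> = "a \<bullet> (- 1, v - 1)" and b = b])
    fix s :: real assume s: "s \<ge> 0"
    have "\<forall>i. s * fst d $ i \<le> 0" using s d1 by (simp add: mult_nonneg_nonpos)
    moreover have "s * snd d \<le> 0" using s d2 by (simp add: mult_nonneg_nonpos)
    ultimately have "(- 1, v - 1) + s *\<^sub>R d \<in> B" unfolding B_def
      by (simp add: add_neg_nonpos) (meson le_less_trans zero_less_one)
    hence "a \<bullet> ((- 1, v - 1) + s *\<^sub>R d) \<ge> b" using ab(3) by blast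
    thus "a \<bullet> (- 1, v - 1) + s * (a \<bullet> d) \<ge> b" by (simp only: inner_add_right inner_scaleR_right)
  qed
  have pnp: "p $ i \<le> 0" for i
  proof -
    have h1: "\<forall>j. fst (- axis i (1::real) :: real^'p, 0::real) $ j \<le> 0" by (simp add: axis_def)
    have "p \<bullet> axis i 1 = p $ i" by (simp add: inner_axis)
    thus ?thesis using dir[OF h1] pq by simp
  qed
  have qnp: "q \<le> 0"
    using dir[of "(0, -1)"] pq by simp
  have qv: "q * v \<ge> b"
  proof -
    have "a \<bullet> (0, v) \<ge> b"
    proof (rule scal1[where \<beta> = "a \<bullet> (- 1, - 1)"])
      fix s :: real assume s: "s > 0"
      have "(0, v) + s *\<^sub>R (- 1, - 1) \<in> B" unfolding B_def using s by simp
      hence "a \<bullet> ((0, v) + s *\<^sub>R (- 1, - 1)) \<ge> b" using ab(3) by blast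
      thus "a \<bullet> (0, v) + s * (a \<bullet> (- 1, - 1)) \<ge> b" by (simp only: inner_add_right inner_scaleR_right)
    qed
    thus ?thesis using pq by simp
  qed
  have Ain: "p \<bullet> gx y + q * fx y \<le> q * v" if "y \<in> Y" for y
  proof -
    have "(gx y, fx y) \<in> A" using that A_def by auto
    hence "a \<bullet> (gx y, fx y) \<le> b" using ab(2) by blast
    thus ?thesis using pq qv by simp
  qed
  have qneg: "q < 0"
  proof (rule ccontr)
    assume "\<not> q < 0"
    hence q0: "q = 0" using qnp by simp
    hence "p \<noteq> 0" using ab(1) pq by (auto simp: zero_prod_def)
    then obtain j where j: "p $ j \<noteq> 0" by (metis vec_eq_iff zero_index)
    have "(\<Sum>i\<in>(UNIV::'p set). 0) < (\<Sum>i\<in>UNIV. p $ i * gx y0 $ i)"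
    proof (rule sum_strict_mono_ex1[of UNIV "\<lambda>i. 0" "\<lambda>i. p $ i * gx y0 $ i"])
      show "\<forall>i\<in>UNIV. 0 \<le> p $ i * gx y0 $ i" using pnp y0(2) by (simp add: mult_nonpos_nonpos less_imp_le)
      show "\<exists>i\<in>UNIV. 0 < p $ i * gx y0 $ i" using j pnp[of j] y0(2)[of j]
        by (intro bexI[of _ j]) (auto simp: mult_neg_neg order_le_less)
    qed auto
    hence "p \<bullet> gx y0 > 0" by (simp add: inner_vec_def)
    thus False using Ain[OF y0(1)] q0 by simp
  qed
  show ?thesis
  proof (intro exI[of _ "(1 / q) *\<^sub>R p"] conjI allI ballI)
    fix i show "0 \<le> ((1 / q) *\<^sub>R p) $ i" using pnp[of i] qneg by (simp add: divide_nonpos_neg)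
  next
    fix y assume y: "y \<in> Y"
    have h: "p \<bullet> gx y + q * fx y \<le> q * v" using Ain[OF y] .
    have "v \<le> (p \<bullet> gx y) / q + fx y"
    proof -
      have "q * v \<ge> q * ((p \<bullet> gx y) / q + fx y)" using h qneg by (simp add: algebra_simps)
      thus ?thesis using qneg by (simp add: mult_le_cancel_left)
    qed
    thus "v \<le> fx y + ((1 / q) *\<^sub>R p) \<bullet> gx y" by simp
  qed
qed
theorem proposition4:
  fixes F f :: "real^'n \<Rightarrow> real^'m \<Rightarrow> real"
    and g :: "real^'n \<Rightarrow> real^'m \<Rightarrow> real^'p"
    and G :: "real^'n \<Rightarrow> real^'q"
    and Y :: "(real^'m) set"
    and \<epsilon> :: real
    and xb :: "real^'n" and yb :: "real^'m"
  assumes A1_convf: "\<And>x. convex_on UNIV (f x)"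
    and A1_convg: "\<And>x i. convex_on UNIV (\<lambda>y. g x y $ i)"
    and A1_C2f: "C2 (\<lambda>z :: (real^'n) \<times> (real^'m). f (fst z) (snd z))"
    and A1_C2g: "\<And>i. C2 (\<lambda>z :: (real^'n) \<times> (real^'m). g (fst z) (snd z) $ i)"
    and A2_compact: "compact Y" and A2_convex: "convex Y"
    and A2_interior: "{y. \<exists>x\<in>Xset G. \<forall>i. g x y $ i \<le> 0} \<subseteq> interior Y"
    and R1: "\<And>x. x \<in> Xset G \<Longrightarrow> \<exists>y. \<forall>i. g x y $ i < 0"
    and eps: "\<epsilon> \<ge> 0"
  shows "BLP_minimizer F f g G \<epsilon> xb yb \<longleftrightarrow>
         (\<exists>lam. (\<forall>i. lam $ i \<ge> 0) \<and> DBP_minimizer F f g G Y \<epsilon> 0 xb yb lam)"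
proof -
  have contf: "continuous_on UNIV (f x)" for x
    by (rule convex_on_continuous[OF open_UNIV A1_convf])
  have contg: "continuous_on UNIV (\<lambda>y. g x y $ i)" for x i
    by (rule convex_on_continuous[OF open_UNIV A1_convg])
  have contlg: "continuous_on UNIV (\<lambda>y. lam \<bullet> g x y)" for x lam
    unfolding inner_vec_def inner_real_def
    by (intro continuous_on_sum continuous_on_mult continuous_on_const contg)
  have inY: "y \<in> Y" if "x \<in> Xset G" "\<forall>i. g x y $ i \<le> 0" for x y
    using A2_interior interior_subset that by blast
  have hsimp: "h_mu f g Y 0 lam x = Inf ((\<lambda>y. f x y + lam \<bullet> g x y) ` Y)" for lam x
    by (simp add: h_mu_def)
  have bdd: "bdd_below ((\<lambda>y. f x y + lam \<bullet> g x y) ` Y)" for x lam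
  proof -
    have "continuous_on Y (\<lambda>y. f x y + lam \<bullet> g x y)"
      by (intro continuous_on_add continuous_on_subset[OF contf] continuous_on_subset[OF contlg]) auto
    hence "compact ((\<lambda>y. f x y + lam \<bullet> g x y) ` Y)" using compact_continuous_image A2_compact by blast
    thus ?thesis by (intro bounded_imp_bdd_below compact_imp_bounded)
  qed
  have lv: "\<exists>ys. (\<forall>i. g x ys $ i \<le> 0) \<and> lower_val f g x = f x ys \<and>
              (\<forall>y. (\<forall>i. g x y $ i \<le> 0) \<longrightarrow> f x ys \<le> f x y)" if xX: "x \<in> Xset G" for x
  proof -
    define S where "S = {y. \<forall>i. g x y $ i \<le> 0}"
    have cS: "closed S" unfolding S_def
      by (intro closed_Collect_all closed_Collect_le contg continuous_on_const)
    have "S \<subseteq> Y" using inY xX S_def by blast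
    hence "S = Y \<inter> S" by blast
    hence compS: "compact S" using compact_Int_closed[OF A2_compact cS] by simp
    obtain y0 where "\<forall>i. g x y0 $ i < 0" using R1 xX by blast
    hence "y0 \<in> S" unfolding S_def by (simp add: less_imp_le)
    hence "S \<noteq> {}" by blast
    then obtain ys where ys: "ys \<in> S" "\<forall>y\<in>S. f x ys \<le> f x y"
      using continuous_attains_inf[OF compS _ continuous_on_subset[OF contf]] by blast
    have "{f x y' | y'. \<forall>i. g x y' $ i \<le> 0} = f x ` S" unfolding S_def by blast
    hence "lower_val f g x = Inf (f x ` S)" by (simp add: lower_val_def)
    also have "\<dots> = f x ys" using ys by (intro cInf_eq_minimum) auto
    finally show ?thesis using ys S_def by blast
  qed
  have weak: "h_mu f g Y 0 lam x \<le> lower_val f g x"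
    if xX: "x \<in> Xset G" and lam: "\<forall>i. lam $ i \<ge> 0" for x lam
  proof -
    obtain ys where ys: "\<forall>i. g x ys $ i \<le> 0" "lower_val f g x = f x ys" using lv[OF xX] by blast
    have "h_mu f g Y 0 lam x \<le> f x ys + lam \<bullet> g x ys"
      unfolding hsimp using inY[OF xX ys(1)] bdd by (intro cInf_lower) auto
    also have "lam \<bullet> g x ys \<le> 0" unfolding inner_vec_def inner_real_def
      using lam ys(1) by (intro sum_nonpos) (simp add: mult_nonneg_nonpos)
    finally show ?thesis using ys(2) by simp
  qed
  have strong: "\<exists>lam. (\<forall>i. lam $ i \<ge> 0) \<and> lower_val f g x \<le> h_mu f g Y 0 lam x"
    if xX: "x \<in> Xset G" for x
  proof -
    obtain ys where ys: "\<forall>i. g x ys $ i \<le> 0" "lower_val f g x = f x ys"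
      "\<forall>y. (\<forall>i. g x y $ i \<le> 0) \<longrightarrow> f x ys \<le> f x y" using lv[OF xX] by blast
    obtain y0 where y0: "\<forall>i. g x y0 $ i < 0" using R1 xX by blast
    have y0Y: "y0 \<in> Y" using inY[OF xX] y0 by (simp add: less_imp_le)
    obtain lam where lam: "\<forall>i. lam $ i \<ge> 0" "\<forall>y\<in>Y. lower_val f g x \<le> f x y + lam \<bullet> g x y"
      using strong_dual[of "f x" "g x" Y y0 "lower_val f g x", OF A1_convf A1_convg A2_convex y0Y]
        y0 ys by auto
    have "lower_val f g x \<le> h_mu f g Y 0 lam x"
      unfolding hsimp using lam(2) y0Y by (intro cInf_greatest) auto
    thus ?thesis using lam(1) by blast
  qed
  have f1: "BLP_feasible f g G \<epsilon> x y" if "DBP_feasible f g G Y \<epsilon> 0 x y lam" for x y lam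
  proof -
    have xX: "x \<in> Xset G" using that unfolding DBP_feasible_def Xset_def by blast
    show ?thesis using that weak[OF xX, of lam] unfolding DBP_feasible_def BLP_feasible_def by auto
  qed
  have f2: "\<exists>lam. (\<forall>i. lam $ i \<ge> 0) \<and> DBP_feasible f g G Y \<epsilon> 0 x y lam"
    if "BLP_feasible f g G \<epsilon> x y" for x y
  proof -
    have xX: "x \<in> Xset G" using that unfolding BLP_feasible_def Xset_def by blast
    obtain lam where "\<forall>i. lam $ i \<ge> 0" "lower_val f g x \<le> h_mu f g Y 0 lam x" using strong[OF xX] by blast
    thus ?thesis using that unfolding DBP_feasible_def BLP_feasible_def by auto
  qed
  show ?thesis
    unfolding BLP_minimizer_def DBP_minimizer_def using f1 f2 by metis
qed

end
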